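(* Let $\psi:M_n\to M_m$ be $k$-partially entanglement breaking. If $\mathcal T$ is any operator system and $\phi:\mathcal T\to M_n$ is $k$-positive, then $\psi\circ\phi$ is completely positive.
   Context: A linear map $\phi$ is $k$-positive if $\mathrm{id}_k\otimes\phi$ is positive, completely positive if $k$-positive for all $k$. A map $\psi:M_n\to M_m$ is $k$-partially entanglement breaking ($k$-PEB) if $\psi\circ\phi$ is completely positive for every $k$-positive map $\phi:M_d\to M_n$, for every $d\ge1$. *)

theory Defs
  imports Complex_Main "Jordan_Normal_Form.Matrix"
begin

definition psd :: "complex mat \<Rightarrow> bool" where
  "psd A \<longleftrightarrow> A \<in> carrier_mat (dim_row A) (dim_row A) \<and>
     (\<forall>v \<in> carrier_vec (dim_row A).
        (let q = (\<Sum>i<dim_row A. \<Sum>j<dim_row A. cnj (v $ i) * A $$ (i, j) * v $ j)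
         in Im q = 0 \<and> 0 \<le> Re q))"

definition ampl :: "nat \<Rightarrow> nat \<Rightarrow> (nat \<Rightarrow> nat \<Rightarrow> complex mat) \<Rightarrow> complex mat" where
  "ampl k n B = mat (k * n) (k * n)
     (\<lambda>(r, c). B (r div n) (c div n) $$ (r mod n, c mod n))"

definition blk :: "nat \<Rightarrow> complex mat \<Rightarrow> nat \<Rightarrow> nat \<Rightarrow> complex mat" where
  "blk d X i j = mat d d (\<lambda>(a, b). X $$ (i * d + a, j * d + b))"

definition lin_mat_map :: "nat \<Rightarrow> nat \<Rightarrow> (complex mat \<Rightarrow> complex mat) \<Rightarrow> bool" where
  "lin_mat_map d n \<phi> \<longleftrightarrow>
     (\<forall>A \<in> carrier_mat d d. \<phi> A \<in> carrier_mat n n) \<and>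
     (\<forall>A \<in> carrier_mat d d. \<forall>B \<in> carrier_mat d d. \<phi> (A + B) = \<phi> A + \<phi> B) \<and>
     (\<forall>A \<in> carrier_mat d d. \<forall>c. \<phi> (c \<cdot>\<^sub>m A) = c \<cdot>\<^sub>m \<phi> A)"

definition k_pos_mat :: "nat \<Rightarrow> nat \<Rightarrow> nat \<Rightarrow> (complex mat \<Rightarrow> complex mat) \<Rightarrow> bool" where
  "k_pos_mat k d n \<phi> \<longleftrightarrow>
     (\<forall>X \<in> carrier_mat (k * d) (k * d). psd X \<longrightarrow> psd (ampl k n (\<lambda>i j. \<phi> (blk d X i j))))"

definition k_PEB :: "nat \<Rightarrow> nat \<Rightarrow> nat \<Rightarrow> (complex mat \<Rightarrow> complex mat) \<Rightarrow> bool" where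
  "k_PEB k n m \<psi> \<longleftrightarrow> lin_mat_map n m \<psi> \<and>
     (\<forall>d \<ge> 1. \<forall>\<phi>. lin_mat_map d n \<phi> \<and> k_pos_mat k d n \<phi> \<longrightarrow>
        (\<forall>l. k_pos_mat l d m (\<psi> \<circ> \<phi>)))"

text \<open>Matrices over V: functions nat => nat => V supported on the l x l square;
  the entries (i,j) with i,j < l form an l x l matrix over V.\<close>
definition vmat :: "nat \<Rightarrow> (nat \<Rightarrow> nat \<Rightarrow> 'a::zero) set" where
  "vmat l = {X. \<forall>i j. (l \<le> i \<or> l \<le> j) \<longrightarrow> X i j = 0}"

definition herm :: "('a \<Rightarrow> 'a) \<Rightarrow> nat \<Rightarrow> (nat \<Rightarrow> nat \<Rightarrow> 'a::zero) set" where
  "herm star l = {X \<in> vmat l. \<forall>i<l. \<forall>j<l. X j i = star (X i j)}"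

definition shift :: "(complex \<Rightarrow> 'a \<Rightarrow> 'a) \<Rightarrow> 'a \<Rightarrow> nat \<Rightarrow> real \<Rightarrow> (nat \<Rightarrow> nat \<Rightarrow> 'a::ab_group_add)
    \<Rightarrow> (nat \<Rightarrow> nat \<Rightarrow> 'a)" where
  "shift smul e l r X = (\<lambda>i j. (if i = j \<and> i < l then smul (complex_of_real r) e else 0) + X i j)"

text \<open>Abstract operator system (Choi--Effros): a complex vector space V (scalar
  multiplication smul) with involution star, matrix cones C l \<subseteq> M_l(V)_h, and an
  Archimedean matrix order unit e.\<close>
definition operator_system ::
  "(complex \<Rightarrow> 'a \<Rightarrow> 'a) \<Rightarrow> ('a \<Rightarrow> 'a) \<Rightarrow> (nat \<Rightarrow> (nat \<Rightarrow> nat \<Rightarrow> 'a::ab_group_add) set) \<Rightarrow> 'a \<Rightarrow> bool"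
  where
  "operator_system smul star C e \<longleftrightarrow>
     vector_space smul \<and>
     (\<forall>x y. star (x + y) = star x + star y) \<and>
     (\<forall>c x. star (smul c x) = smul (cnj c) (star x)) \<and>
     (\<forall>x. star (star x) = x) \<and>
     (\<forall>l\<ge>1. C l \<subseteq> herm star l) \<and>
     (\<forall>l\<ge>1. \<forall>X\<in>C l. \<forall>Y\<in>C l. (\<lambda>i j. X i j + Y i j) \<in> C l) \<and>
     (\<forall>l\<ge>1. \<forall>X\<in>C l. \<forall>r::real. 0 \<le> r \<longrightarrow> (\<lambda>i j. smul (complex_of_real r) (X i j)) \<in> C l) \<and>
     (\<forall>l\<ge>1. \<forall>X\<in>C l. (\<lambda>i j. - X i j) \<in> C l \<longrightarrow> X = (\<lambda>i j. 0)) \<and>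
     (\<forall>p\<ge>1. \<forall>l\<ge>1. \<forall>X\<in>C p. \<forall>\<alpha>::nat \<Rightarrow> nat \<Rightarrow> complex.
        (\<lambda>i j. if i < l \<and> j < l
               then (\<Sum>a<p. \<Sum>b<p. smul (cnj (\<alpha> a i) * \<alpha> b j) (X a b)) else 0) \<in> C l) \<and>
     star e = e \<and>
     (\<forall>l\<ge>1. \<forall>X\<in>herm star l. \<exists>r>0. shift smul e l r X \<in> C l) \<and>
     (\<forall>l\<ge>1. \<forall>X\<in>herm star l. (\<forall>r>0. shift smul e l r X \<in> C l) \<longrightarrow> X \<in> C l)"

definition lin_os_map :: "(complex \<Rightarrow> 'a \<Rightarrow> 'a::ab_group_add) \<Rightarrow> nat \<Rightarrow> ('a \<Rightarrow> complex mat) \<Rightarrow> bool" where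
  "lin_os_map smul n \<phi> \<longleftrightarrow>
     (\<forall>x. \<phi> x \<in> carrier_mat n n) \<and>
     (\<forall>x y. \<phi> (x + y) = \<phi> x + \<phi> y) \<and>
     (\<forall>c x. \<phi> (smul c x) = c \<cdot>\<^sub>m \<phi> x)"

definition k_pos_os :: "(nat \<Rightarrow> (nat \<Rightarrow> nat \<Rightarrow> 'a) set) \<Rightarrow> nat \<Rightarrow> nat \<Rightarrow> ('a \<Rightarrow> complex mat) \<Rightarrow> bool" where
  "k_pos_os C k n \<phi> \<longleftrightarrow> (\<forall>X \<in> C k. psd (ampl k n (\<lambda>i j. \<phi> (X i j))))"

definition compl_pos_os :: "(nat \<Rightarrow> (nat \<Rightarrow> nat \<Rightarrow> 'a) set) \<Rightarrow> nat \<Rightarrow> ('a \<Rightarrow> complex mat) \<Rightarrow> bool" where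
  "compl_pos_os C n \<phi> \<longleftrightarrow> (\<forall>l. k_pos_os C l n \<phi>)"

end

theory Submission
  imports Defs
begin


definition qf :: "nat \<Rightarrow> (nat\<Rightarrow>nat\<Rightarrow>complex) \<Rightarrow> (nat\<Rightarrow>complex) \<Rightarrow> complex" where
  "qf N Y v = (\<Sum>i<N. \<Sum>j<N. cnj (v i) * Y i j * v j)"

definition PSD :: "nat \<Rightarrow> (nat\<Rightarrow>nat\<Rightarrow>complex) \<Rightarrow> bool" where
  "PSD N Y \<longleftrightarrow> (\<forall>v. Im (qf N Y v) = 0 \<and> 0 \<le> Re (qf N Y v))"

lemma qf_ext:
  "qf (Suc N) Y (\<lambda>x. if x < N then v x else t) =
   qf N Y v + (\<Sum>i<N. cnj (v i) * Y i N) * t + cnj t * (\<Sum>j<N. Y N j * v j) + cnj t * Y N N * t"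
proof -
  have a: "(\<Sum>i<N. \<Sum>j<Suc N. cnj (v i) * Y i j * (if j < N then v j else t))
     = qf N Y v + (\<Sum>i<N. cnj (v i) * Y i N) * t"
    by (simp add: qf_def sum.distrib sum_distrib_right)
  have b: "(\<Sum>j<Suc N. cnj t * Y N j * (if j < N then v j else t))
     = cnj t * (\<Sum>j<N. Y N j * v j) + cnj t * Y N N * t"
    by (simp add: sum_distrib_left mult.assoc)
  show ?thesis unfolding qf_def
    apply (subst sum.lessThan_Suc)
    using a[unfolded qf_def] b by (simp add: algebra_simps)
qed

lemma qf_cong: "(\<And>i. i < N \<Longrightarrow> v i = w i) \<Longrightarrow> qf N Y v = qf N Y w"
  unfolding qf_def by (intro sum.cong refl) auto

lemma qf_unit: "j < N \<Longrightarrow> qf N Y (\<lambda>x. if x = j then 1 else 0) = Y j j"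
  unfolding qf_def by (simp add: if_distrib[of "\<lambda>x. x * _"] if_distrib[of "\<lambda>x. _ * x"] if_distrib[of cnj] cong: if_cong)

lemma qf_zero: "qf N Y (\<lambda>x. 0) = 0"
  unfolding qf_def by simp

lemma PSD_facts:
  assumes "PSD (Suc N) Y"
  shows "Im (Y N N) = 0" "0 \<le> Re (Y N N)" "\<And>i. i < N \<Longrightarrow> Y i N = cnj (Y N i)"
proof -
  have E: "qf (Suc N) Y (\<lambda>x. if x < N then v x else t) =
   qf N Y v + (\<Sum>i<N. cnj (v i) * Y i N) * t + cnj t * (\<Sum>j<N. Y N j * v j) + cnj t * Y N N * t" for v t
    by (rule qf_ext)
  have P: "Im (qf (Suc N) Y w) = 0 \<and> 0 \<le> Re (qf (Suc N) Y w)" for w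
    using assms unfolding PSD_def by blast
  have "qf (Suc N) Y (\<lambda>x. if x < N then 0 else 1) = Y N N"
    using E[of "\<lambda>x. 0" 1] by (simp add: qf_zero)
  then show "Im (Y N N) = 0" "0 \<le> Re (Y N N)" using P by metis+
  fix i assume i: "i < N"
  have e1: "(\<Sum>ia<N. cnj (if ia = i then 1 else 0) * Y ia N) = Y i N"
    using i by (simp add: if_distrib[of "\<lambda>x. x * _"] if_distrib[of cnj] cong: if_cong)
  have e2: "(\<Sum>j<N. Y N j * (if j = i then 1 else 0)) = Y N i"
    using i by (simp add: if_distrib[of "\<lambda>x. _ * x"] cong: if_cong)
  have q: "qf (Suc N) Y (\<lambda>x. if x < N then (if x = i then 1 else 0) else t) =
      Y i i + Y i N * t + cnj t * Y N i + cnj t * Y N N * t" for t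
    using E[of "\<lambda>x. if x = i then 1 else 0" t] qf_unit[OF i, of Y] e1 e2 by simp
  have ii: "Im (Y i i) = 0" using P[of "\<lambda>x. if x < N then (if x = i then 1 else 0) else 0"] q[of 0] by simp
  have nn: "Im (Y N N) = 0"
    using E[of "\<lambda>x. 0" 1] P[of "\<lambda>x. if x < N then 0 else 1"] by (simp add: qf_zero)
  have h1: "Im (Y i N + Y N i) = 0"
    using P[of "\<lambda>x. if x < N then (if x = i then 1 else 0) else 1"] q[of 1] ii nn by simp
  have h2: "Re (Y i N - Y N i) = 0"
    using P[of "\<lambda>x. if x < N then (if x = i then 1 else 0) else \<i>"] q[of "\<i>"] ii nn by simp
  show "Y i N = cnj (Y N i)" using h1 h2 by (simp add: complex_eq_iff)
qed

lemma PSD_zero_row: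
  assumes "PSD (Suc N) Y" "Y N N = 0" "j < N"
  shows "Y N j = 0"
proof (rule ccontr)
  assume nz: "Y N j \<noteq> 0"
  have E: "qf (Suc N) Y (\<lambda>x. if x < N then v x else t) =
   qf N Y v + (\<Sum>i<N. cnj (v i) * Y i N) * t + cnj t * (\<Sum>j<N. Y N j * v j) + cnj t * Y N N * t" for v t
    by (rule qf_ext)
  have P: "0 \<le> Re (qf (Suc N) Y w)" for w
    using assms unfolding PSD_def by blast
  have e1: "(\<Sum>ia<N. cnj (if ia = j then 1 else 0) * Y ia N) = Y j N"
    using assms(3) by (simp add: if_distrib[of "\<lambda>x. x * _"] if_distrib[of cnj] cong: if_cong)
  have e2: "(\<Sum>i<N. Y N i * (if i = j then 1 else 0)) = Y N j"
    using assms(3) by (simp add: if_distrib[of "\<lambda>x. _ * x"] cong: if_cong)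
  have herm: "Y j N = cnj (Y N j)" using PSD_facts(3)[OF assms(1) assms(3)] .
  define z where "z = Y N j"
  define c where "c = Re (cnj z * z)"
  have cpos: "c > 0" using nz unfolding c_def z_def
    by (simp add: mult.commute[of "cnj _"] complex_mult_cnj complex_eq_iff sum_power2_gt_zero_iff)
  define r where "r = (Re (Y j j) + 1) / (2 * c)"
  have q: "qf (Suc N) Y (\<lambda>x. if x < N then (if x = j then 1 else 0) else - of_real r * z) =
      Y j j + cnj z * (- of_real r * z) + cnj (- of_real r * z) * z"
    using E[of "\<lambda>x. if x = j then 1 else 0" "- of_real r * z"] qf_unit[OF assms(3), of Y] e1 e2 herm assms(2)
    unfolding z_def by simp
  have "Re (Y j j + cnj z * (- of_real r * z) + cnj (- of_real r * z) * z) = Re (Y j j) - 2 * r * c"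
    unfolding c_def by (simp add: algebra_simps)
  also have "\<dots> = -1" unfolding r_def using cpos by (simp add: field_simps)
  finally show False using P[of "\<lambda>x. if x < N then (if x = j then 1 else 0) else - of_real r * z"] q by simp
qed

lemma PSD_gram:
  "PSD N Y \<Longrightarrow> \<exists>U (R::nat). \<forall>i<N. \<forall>j<N. Y i j = (\<Sum>t<R. cnj (U t i) * U t j)"
proof (induction N arbitrary: Y)
  case 0
  then show ?case by auto
next
  case (Suc N)
  have facts: "Im (Y N N) = 0" "0 \<le> Re (Y N N)" "\<And>i. i < N \<Longrightarrow> Y i N = cnj (Y N i)"
    using PSD_facts[OF Suc.prems] by auto
  define P where "P = Y N N"
  have Pr: "P = of_real (Re P)" using facts(1) unfolding P_def by (simp add: complex_eq_iff)
  define Y' where "Y' = (\<lambda>i j. Y i j - Y i N * Y N j / P)"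
  have "PSD N Y'"
    unfolding PSD_def
  proof
    fix v
    define s where "s = (\<Sum>j<N. Y N j * v j)"
    have a: "(\<Sum>i<N. cnj (v i) * Y i N) = cnj s"
      unfolding s_def by (simp add: facts(3) mult.commute)
    have q': "qf N Y' v = qf N Y v - cnj s * s / P"
    proof -
      have "qf N Y' v = qf N Y v - (\<Sum>i<N. \<Sum>j<N. (cnj (v i) * Y i N) * (Y N j * v j) / P)"
        unfolding qf_def Y'_def by (simp add: algebra_simps sum_subtractf)
      also have "(\<Sum>i<N. \<Sum>j<N. (cnj (v i) * Y i N) * (Y N j * v j) / P) = (\<Sum>i<N. cnj (v i) * Y i N) * s / P"
        unfolding s_def by (simp add: sum_product sum_divide_distrib)
      also have "\<dots> = cnj s * s / P" using a by simp
      finally show ?thesis .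
    qed
    define t where "t = - s / P"
    have "qf (Suc N) Y (\<lambda>x. if x < N then v x else t) = qf N Y v + cnj s * t + cnj t * s + cnj t * P * t"
      using qf_ext[of N Y v t] a unfolding s_def P_def by simp
    also have "\<dots> = qf N Y' v"
    proof (cases "P = 0")
      case True then show ?thesis unfolding q' t_def by simp
    next
      case False
      have cP: "cnj P = P" using facts(1) unfolding P_def by (simp add: complex_eq_iff)
      show ?thesis unfolding q' t_def using False cP by (simp add: field_simps)
    qed
    finally show "Im (qf N Y' v) = 0 \<and> 0 \<le> Re (qf N Y' v)"
      using Suc.prems[unfolded PSD_def, rule_format, of "(\<lambda>x. if x < N then v x else t)"] by simp
  qed
  then obtain U and R :: nat where UR: "\<forall>i<N. \<forall>j<N. Y' i j = (\<Sum>t<R. cnj (U t i) * U t j)"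
    using Suc.IH[OF \<open>PSD N Y'\<close>] by blast
  define sq where "sq = complex_of_real (sqrt (Re P))"
  have "sq * sq = of_real (sqrt (Re P) * sqrt (Re P))" unfolding sq_def by (simp only: of_real_mult)
  also have "\<dots> = of_real (Re P)" using facts(2) unfolding P_def by simp
  finally have sqsq: "sq * sq = P" using Pr by simp
  have csq: "cnj sq = sq" unfolding sq_def by simp
  define U' where "U' = (\<lambda>t i. if t < R then (if i < N then U t i else 0) else Y N i / sq)"
  have "\<forall>i<Suc N. \<forall>j<Suc N. Y i j = (\<Sum>t<Suc R. cnj (U' t i) * U' t j)"
  proof (intro allI impI)
    fix i j assume i: "i < Suc N" and j: "j < Suc N"
    have split: "(\<Sum>t<Suc R. cnj (U' t i) * U' t j) =
       (\<Sum>t<R. cnj (U' t i) * U' t j) + cnj (Y N i) * Y N j / P"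
      unfolding U'_def using sqsq csq by (simp add: field_simps)
    show "Y i j = (\<Sum>t<Suc R. cnj (U' t i) * U' t j)"
    proof (cases "i < N \<and> j < N")
      case True
      then have "(\<Sum>t<R. cnj (U' t i) * U' t j) = Y' i j" using UR unfolding U'_def by simp
      then show ?thesis unfolding split Y'_def using True facts(3) by simp
    next
      case False
      then have "(\<Sum>t<R. cnj (U' t i) * U' t j) = 0" unfolding U'_def by auto
      moreover have "Y i j = cnj (Y N i) * Y N j / P"
      proof (cases "P = 0")
        case True
        have z: "\<And>x. x < N \<Longrightarrow> Y N x = 0" using PSD_zero_row[OF Suc.prems] True unfolding P_def by blast
        have "Y i j = 0"
        proof (cases "i = N")
          case iN: True
          show ?thesis
          proof (cases "j = N")
            case True then show ?thesis using iN \<open>P = 0\<close> unfolding P_def by simp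
          next
            case False then show ?thesis using iN z j by simp
          qed
        next
          case iN: False
          then have "j = N" "i < N" using False i j by auto
          then show ?thesis using z facts(3) by simp
        qed
        then show ?thesis using True by simp
      next
        case nz: False
        have cP: "cnj P = P" using facts(1) unfolding P_def by (simp add: complex_eq_iff)
        show ?thesis
        proof (cases "i = N")
          case True
          then show ?thesis using nz cP unfolding P_def by simp
        next
          case ff: False
          then have "j = N" "i < N" using False i j by auto
          then show ?thesis using nz facts(3) unfolding P_def by simp
        qed
      qed
      ultimately show ?thesis unfolding split by simp
    qed
  qed
  then show ?case by blast
qed


lemma psd_PSD: "psd A \<Longrightarrow> PSD (dim_row A) (\<lambda>i j. A $$ (i, j))"
  unfolding PSD_def
proof
  fix v assume "psd A"
  have eq: "(\<Sum>i<dim_row A. \<Sum>j<dim_row A. cnj (vec (dim_row A) v $ i) * A $$ (i, j) * vec (dim_row A) v $ j)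
      = qf (dim_row A) (\<lambda>i j. A $$ (i, j)) v"
    unfolding qf_def by (intro sum.cong refl) simp
  have "Im (\<Sum>i<dim_row A. \<Sum>j<dim_row A. cnj (vec (dim_row A) v $ i) * A $$ (i, j) * vec (dim_row A) v $ j) = 0 \<and>
    0 \<le> Re (\<Sum>i<dim_row A. \<Sum>j<dim_row A. cnj (vec (dim_row A) v $ i) * A $$ (i, j) * vec (dim_row A) v $ j)"
    using \<open>psd A\<close> unfolding psd_def Let_def by (meson vec_carrier)
  then show "Im (qf (dim_row A) (\<lambda>i j. A $$ (i, j)) v) = 0 \<and> 0 \<le> Re (qf (dim_row A) (\<lambda>i j. A $$ (i, j)) v)"
    unfolding eq .
qed

lemma ampl_cong:
  assumes "\<And>i j. i < k \<Longrightarrow> j < k \<Longrightarrow> B i j = B' i j"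
  shows "ampl k n B = ampl k n B'"
  unfolding ampl_def
proof (rule eq_matI)
  fix r c assume r: "r < dim_row (mat (k * n) (k * n) (\<lambda>(r, c). B' (r div n) (c div n) $$ (r mod n, c mod n)))"
    and c: "c < dim_col (mat (k * n) (k * n) (\<lambda>(r, c). B' (r div n) (c div n) $$ (r mod n, c mod n)))"
  then have "r div n < k" "c div n < k" by (simp_all add: less_mult_imp_div_less)
  then show "mat (k * n) (k * n) (\<lambda>(r, c). B (r div n) (c div n) $$ (r mod n, c mod n)) $$ (r, c) =
         mat (k * n) (k * n) (\<lambda>(r, c). B' (r div n) (c div n) $$ (r mod n, c mod n)) $$ (r, c)"
    using r c assms by simp
qed auto

lemma psd_empty: "psd (ampl 0 m B)"
  unfolding psd_def ampl_def by auto


lemma cnj_self_nonneg: "Im (cnj z * z) = 0 \<and> 0 \<le> Re (cnj z * z)"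
  by (simp add: mult.commute[of "cnj z"] complex_mult_cnj)

definition choi :: "nat \<Rightarrow> complex mat" where
  "choi l = mat (l * l) (l * l) (\<lambda>(r, c). if r div l = r mod l \<and> c div l = c mod l then 1 else 0)"

lemma blk_choi: "i < l \<Longrightarrow> j < l \<Longrightarrow> a < l \<Longrightarrow> b < l \<Longrightarrow>
   blk l (choi l) i j $$ (a, b) = (if a = i \<and> b = j then 1 else 0)"
proof -
  assume i: "i < l" and j: "j < l" and a: "a < l" and b: "b < l"
  have r1: "i * l + a < l * l"
  proof -
    have "i * l + a < Suc i * l" using a by simp
    also have "\<dots> \<le> l * l" using i by (intro mult_le_mono1) simp
    finally show ?thesis .
  qed
  have r2: "j * l + b < l * l"
  proof -
    have "j * l + b < Suc j * l" using b by simp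
    also have "\<dots> \<le> l * l" using j by (intro mult_le_mono1) simp
    finally show ?thesis .
  qed
  note r = r1 r2
  have d: "(i * l + a) div l = i" "(i * l + a) mod l = a" "(j * l + b) div l = j" "(j * l + b) mod l = b"
    using a b by auto
  show ?thesis unfolding blk_def choi_def using a b r d by auto
qed

lemma psd_choi: "psd (choi l)"
proof -
  have car: "choi l \<in> carrier_mat (dim_row (choi l)) (dim_row (choi l))" unfolding choi_def by simp
  show ?thesis unfolding psd_def Let_def
  proof (rule conjI[OF car], intro ballI)
    fix v :: "complex vec"
    define w where "w = (\<lambda>r. if r div l = r mod l then v $ r else 0)"
    have "(\<Sum>i<dim_row (choi l). \<Sum>j<dim_row (choi l). cnj (v $ i) * choi l $$ (i, j) * v $ j)
       = (\<Sum>i<l*l. \<Sum>j<l*l. cnj (w i) * w j)"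
      unfolding choi_def w_def by (intro sum.cong refl) auto
    also have "\<dots> = cnj (\<Sum>i<l*l. w i) * (\<Sum>j<l*l. w j)"
      by (simp add: sum_product)
    finally have eq: "(\<Sum>i<dim_row (choi l). \<Sum>j<dim_row (choi l). cnj (v $ i) * choi l $$ (i, j) * v $ j)
       = cnj (\<Sum>i<l*l. w i) * (\<Sum>j<l*l. w j)" .
    show "Im (\<Sum>i<dim_row (choi l). \<Sum>j<dim_row (choi l). cnj (v $ i) * choi l $$ (i, j) * v $ j) = 0 \<and>
          0 \<le> Re (\<Sum>i<dim_row (choi l). \<Sum>j<dim_row (choi l). cnj (v $ i) * choi l $$ (i, j) * v $ j)"
      unfolding eq by (rule cnj_self_nonneg)
  qed
qed


theorem mainTheorem17:
  fixes smul :: "complex \<Rightarrow> 'a \<Rightarrow> 'a::ab_group_add"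
    and star :: "'a \<Rightarrow> 'a" and C :: "nat \<Rightarrow> (nat \<Rightarrow> nat \<Rightarrow> 'a) set" and e :: 'a
    and \<psi> :: "complex mat \<Rightarrow> complex mat" and \<phi> :: "'a \<Rightarrow> complex mat"
    and k n m :: nat
  assumes "operator_system smul star C e"
    and "1 \<le> k"
    and "k_PEB k n m \<psi>"
    and "lin_os_map smul n \<phi>"
    and "k_pos_os C k n \<phi>"
  shows "compl_pos_os C m (\<psi> \<circ> \<phi>)"
proof -
  note OS = assms(1)[unfolded operator_system_def]
  have VS: "vector_space smul" using OS by blast
  interpret VS: vector_space smul by (rule VS)
  have Cadd: "\<And>l X Y. l \<ge> 1 \<Longrightarrow> X \<in> C l \<Longrightarrow> Y \<in> C l \<Longrightarrow> (\<lambda>i j. X i j + Y i j) \<in> C l"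
    using OS by blast
  have Ccomp: "\<And>p l X \<alpha>. p \<ge> 1 \<Longrightarrow> l \<ge> 1 \<Longrightarrow> X \<in> C p \<Longrightarrow>
        (\<lambda>i j. if i < l \<and> j < l
               then (\<Sum>a<p. \<Sum>b<p. smul (cnj (\<alpha> a i) * \<alpha> b j) (X a b)) else 0) \<in> C l"
    using OS by blast
  have phi_car: "\<And>x. \<phi> x \<in> carrier_mat n n" and phi_add: "\<And>x y. \<phi> (x + y) = \<phi> x + \<phi> y"
    and phi_sc: "\<And>c x. \<phi> (smul c x) = c \<cdot>\<^sub>m \<phi> x"
    using assms(4) unfolding lin_os_map_def by auto
  have PEB: "\<And>d \<phi>'. d \<ge> 1 \<Longrightarrow> lin_mat_map d n \<phi>' \<Longrightarrow> k_pos_mat k d n \<phi>' \<Longrightarrow> k_pos_mat l d m (\<psi> \<circ> \<phi>')" for l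
    using assms(3) unfolding k_PEB_def by blast
  show ?thesis unfolding compl_pos_os_def k_pos_os_def
  proof (intro allI ballI)
    fix l X assume XC: "X \<in> C l"
    show "psd (ampl l m (\<lambda>i j. (\<psi> \<circ> \<phi>) (X i j)))"
    proof (cases "l = 0")
      case True then show ?thesis using psd_empty by simp
    next
      case False
      then have l1: "l \<ge> 1" by simp
      define \<Gamma> where "\<Gamma> = (\<lambda>A. \<Sum>a<l. \<Sum>b<l. smul (A $$ (a, b)) (X a b))"
      define \<phi>' where "\<phi>' = (\<lambda>A. \<phi> (\<Gamma> A))"
      have lin: "lin_mat_map l n \<phi>'"
        unfolding lin_mat_map_def
      proof (intro conjI ballI allI)
        fix A :: "complex mat" assume "A \<in> carrier_mat l l"
        show "\<phi>' A \<in> carrier_mat n n" unfolding \<phi>'_def by (rule phi_car)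
      next
        fix A B :: "complex mat" assume A: "A \<in> carrier_mat l l" and B: "B \<in> carrier_mat l l"
        have "\<Gamma> (A + B) = \<Gamma> A + \<Gamma> B"
          unfolding \<Gamma>_def using A B
          by (simp add: VS.scale_left_distrib sum.distrib)
        then show "\<phi>' (A + B) = \<phi>' A + \<phi>' B" unfolding \<phi>'_def by (simp add: phi_add)
      next
        fix A :: "complex mat" and c assume A: "A \<in> carrier_mat l l"
        have "\<Gamma> (c \<cdot>\<^sub>m A) = smul c (\<Gamma> A)"
          unfolding \<Gamma>_def using A
          by (simp add: VS.scale_sum_right)
        then show "\<phi>' (c \<cdot>\<^sub>m A) = c \<cdot>\<^sub>m \<phi>' A" unfolding \<phi>'_def by (simp add: phi_sc)
      qed
      have kpos: "k_pos_mat k l n \<phi>'"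
        unfolding k_pos_mat_def
      proof (intro ballI impI)
        fix Y assume Ycar: "Y \<in> carrier_mat (k * l) (k * l)" and Ypsd: "psd Y"
        have "PSD (k * l) (\<lambda>i j. Y $$ (i, j))" using psd_PSD[OF Ypsd] Ycar by simp
        from PSD_gram[OF this] obtain U and R :: nat
          where UR: "\<forall>i<k*l. \<forall>j<k*l. Y $$ (i, j) = (\<Sum>t<R. cnj (U t i) * U t j)" by blast
        define W where "W = (\<lambda>t i j. if i < k \<and> j < k then
            (\<Sum>a<l. \<Sum>b<l. smul (cnj (U t (i * l + a)) * U t (j * l + b)) (X a b)) else 0)"
        have WC: "W t \<in> C k" for t
          unfolding W_def using Ccomp[OF l1 assms(2) XC, of "\<lambda>a i. U t (i * l + a)"] by simp
        have SC: "(\<lambda>i j. \<Sum>t<R'. W t i j) \<in> C k" for R'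
        proof (induction R')
          case 0
          have "(\<lambda>i j. if i < k \<and> j < k
               then (\<Sum>a<l. \<Sum>b<l. smul (cnj ((\<lambda>a i. 0::complex) a i) * (\<lambda>a i. 0) b j) (X a b)) else 0) \<in> C k"
            by (rule Ccomp[OF l1 assms(2) XC])
          moreover have "(\<lambda>i j. if i < k \<and> j < k
               then (\<Sum>a<l. \<Sum>b<l. smul (cnj ((\<lambda>a i. 0::complex) a i) * (\<lambda>a i. 0) b j) (X a b)) else 0) = (\<lambda>i j. 0)"
          proof (intro ext)
            fix i j
            have "smul 0 x = 0" for x by (rule VS.scale_zero_left)
            then show "(if i < k \<and> j < k
               then (\<Sum>a<l. \<Sum>b<l. smul (cnj ((\<lambda>a i. 0::complex) a i) * (\<lambda>a i. 0) b j) (X a b)) else 0) = 0"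
              by simp
          qed
          ultimately show ?case by simp
        next
          case (Suc R')
          have "(\<lambda>i j. (\<Sum>t<R'. W t i j) + W R' i j) \<in> C k"
            using Cadd[OF assms(2) Suc.IH WC[of R']] .
          then show ?case by simp
        qed
        have idx: "i * l + a < k * l" if "i < k" "a < l" for i a
        proof -
          have "i * l + a < Suc i * l" using that by simp
          also have "\<dots> \<le> k * l" using that by (intro mult_le_mono1) simp
          finally show ?thesis .
        qed
        have GZ: "\<Gamma> (blk l Y i j) = (\<Sum>t<R. W t i j)" if i: "i < k" and j: "j < k" for i j
        proof -
          have "\<Gamma> (blk l Y i j) = (\<Sum>a<l. \<Sum>b<l. smul (\<Sum>t<R. cnj (U t (i * l + a)) * U t (j * l + b)) (X a b))"
            unfolding \<Gamma>_def blk_def by (intro sum.cong refl) (simp add: UR idx i j)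
          also have "\<dots> = (\<Sum>a<l. \<Sum>b<l. \<Sum>t<R. smul (cnj (U t (i * l + a)) * U t (j * l + b)) (X a b))"
            by (simp add: VS.scale_sum_left)
          also have "\<dots> = (\<Sum>t<R. \<Sum>a<l. \<Sum>b<l. smul (cnj (U t (i * l + a)) * U t (j * l + b)) (X a b))"
            by (simp add: sum.swap[of _ "{..<R}"])
          also have "\<dots> = (\<Sum>t<R. W t i j)" unfolding W_def using i j by simp
          finally show ?thesis .
        qed
        have "psd (ampl k n (\<lambda>i j. \<phi> ((\<lambda>i j. \<Sum>t<R. W t i j) i j)))"
          using bspec[OF assms(5)[unfolded k_pos_os_def] SC[of R]] by simp
        moreover have "ampl k n (\<lambda>i j. \<phi> ((\<lambda>i j. \<Sum>t<R. W t i j) i j)) = ampl k n (\<lambda>i j. \<phi>' (blk l Y i j))"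
          by (intro ampl_cong) (simp add: \<phi>'_def GZ)
        ultimately show "psd (ampl k n (\<lambda>i j. \<phi>' (blk l Y i j)))" by simp
      qed
      have "k_pos_mat l l m (\<psi> \<circ> \<phi>')" by (rule PEB[OF l1 lin kpos])
      then have P: "psd (ampl l m (\<lambda>i j. (\<psi> \<circ> \<phi>') (blk l (choi l) i j)))"
        unfolding k_pos_mat_def using psd_choi[of l] by (simp add: choi_def)
      have "\<Gamma> (blk l (choi l) i j) = X i j" if i: "i < l" and j: "j < l" for i j
      proof -
        have "\<Gamma> (blk l (choi l) i j) = (\<Sum>a<l. \<Sum>b<l. smul (if a = i \<and> b = j then 1 else 0) (X a b))"
          unfolding \<Gamma>_def using i j by (intro sum.cong refl) (simp add: blk_choi)
        also have "\<dots> = (\<Sum>a<l. \<Sum>b<l. if a = i \<and> b = j then X a b else 0)"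
          by (intro sum.cong refl) simp
        also have "\<dots> = (\<Sum>a<l. if a = i then X a j else 0)"
        proof (intro sum.cong refl)
          fix a show "(\<Sum>b<l. if a = i \<and> b = j then X a b else 0) = (if a = i then X a j else 0)"
            using j by (cases "a = i") simp_all
        qed
        also have "\<dots> = X i j" using i by simp
        finally show ?thesis .
      qed
      then have "ampl l m (\<lambda>i j. (\<psi> \<circ> \<phi>') (blk l (choi l) i j)) = ampl l m (\<lambda>i j. (\<psi> \<circ> \<phi>) (X i j))"
        by (intro ampl_cong) (simp add: \<phi>'_def)
      then show ?thesis using P by simp
    qed
  qed
qed

end
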